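(* Let $\alpha\in(0,1)$ and let $v(\beta)$, $\beta\in(1,1/\alpha)$, be defined by $$\frac1{v(\beta)}=\frac{\beta+1}{\beta-1}+\frac{1-\alpha}{1+\alpha}\left(\frac{\beta+3}{2(\beta-1)}+\frac{\beta(\beta+1)}{(\beta-1)^2}(s_+-s_-)+C\,s_-\right),$$ with $s_+=\frac{1-\alpha}{1-\alpha\beta}$, $s_-=\frac{1-\alpha}{1-\alpha/\beta}$, $C=\frac{2\beta}{\beta-1}-\frac{\beta-\alpha}{\beta-\alpha^2}$. Then $\frac{\partial v}{\partial\beta}>0$ at $\beta=\beta_c^{(2)}:=1/\sqrt{\alpha}$. Consequently $\beta_c^{(2)}<\beta_{\max}$, where $\beta_{\max}$ is the value of $\beta\in(1,1/\alpha)$ at which $v$ attains its maximum.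
   Context: $v(\beta)$ is the asymptotic speed of biased random walk on the random spanning tree of the ladder graph; $1/v$ is convex on $(1,1/\alpha)$, so $v$ is unimodal with a maximizer $\beta_{\max}$. *)

theory Defs
  imports "HOL-Analysis.Analysis"
begin

text \<open>Speed v(beta) of the biased random walk on the random spanning tree of the
ladder, given via the explicit formula for 1/v, for beta in (1, 1/alpha).\<close>

definition ladder_inv_speed :: "real \<Rightarrow> real \<Rightarrow> real" where
  "ladder_inv_speed \<alpha> \<beta> =
     (let sp = (1 - \<alpha>) / (1 - \<alpha> * \<beta>);
          sm = (1 - \<alpha>) / (1 - \<alpha> / \<beta>);
          C  = 2 * \<beta> / (\<beta> - 1) - (\<beta> - \<alpha>) / (\<beta> - \<alpha>^2)
      in (\<beta> + 1) / (\<beta> - 1)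
         + (1 - \<alpha>) / (1 + \<alpha>) *
           ((\<beta> + 3) / (2 * (\<beta> - 1))
            + \<beta> * (\<beta> + 1) / (\<beta> - 1)^2 * (sp - sm)
            + C * sm))"

definition ladder_speed :: "real \<Rightarrow> real \<Rightarrow> real" where
  "ladder_speed \<alpha> \<beta> = 1 / ladder_inv_speed \<alpha> \<beta>"

end

theory Submission
  imports Defs
begin
definition TT :: "real \<Rightarrow> real \<Rightarrow> real" where "TT a b = (- 4*(1-a*b)^2*(b-a)^2*(b-a^2)^2
 + (1-a)^2*a*(((b+1)^2+2*b*(b+1))*((b-1)*(1-a*b)*(b-a)) - b*(b+1)^2*((1-a*b)*(b-a) - a*(b-1)*(b-a) + (b-1)*(1-a*b)))*(b-a^2)^2
 + 2*(1-a)^2*(2*b*((b-1)*(b-a)) - b^2*(2*b-1-a))*(1-a*b)^2*(b-a^2)^2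
 + (1-a)^2*a^2*(b-1)^2*(1-a*b)^2*(b-a)^2)"
definition QQ :: "real \<Rightarrow> real \<Rightarrow> real" where "QQ b u = b^18*u^9*(- 6*b^4) + b^16*u^8*(12*b^3 - b^4 + 10*b^5 + b^6) + b^14*u^7*(- 2*b^2 + 6*b^3 - 15*b^4 - 5*b^6) + b^12*u^6*(- 2*b - 24*b^2 + 6*b^3 - 10*b^4 - 2*b^6) + b^10*u^5*(1 + 8*b + b^2 + 34*b^3 - 8*b^4 + 12*b^5 + 4*b^6) + b^8*u^4*(- 2 + 16*b - 11*b^2 + 2*b^3 - 12*b^4 + 6*b^5 - 3*b^6) + b^6*u^3*(- 2 - 4*b - 26*b^2 + 10*b^3 - 7*b^4 - 4*b^5 + b^6) + b^4*u^2*(- 2 + 2*b + 10*b^2 + 10*b^3 - 4*b^4) + b^2*u^1*(1 + 4*b - 5*b^2 - 2*b^3 + 4*b^4) + b^0*u^0*(- 3*b^2 + 2*b^3 - b^4)"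
definition SS :: "real \<Rightarrow> real \<Rightarrow> real" where "SS x y = (32*y^6 + 56*y^7 + 32*y^8 + 6*y^9 + 416*x*y^5 + 1336*x*y^6 + 1532*x*y^7 + 748*x*y^8 + 132*x*y^9 + 2168*x^2*y^4 + 10958*x^2*y^5 + 20919*x^2*y^6 + 19021*x^2*y^7 + 8281*x^2*y^8 + 1386*x^2*y^9 + 5744*x^3*y^3 + 43644*x^3*y^4 + 127140*x^3*y^5 + 185646*x^3*y^6 + 144996*x^3*y^7 + 57832*x^3*y^8 + 9240*x^3*y^9 + 8028*x^4*y^2 + 93486*x^4*y^3 + 405527*x^4*y^4 + 890930*x^4*y^5 + 1097443*x^4*y^6 + 768869*x^4*y^7 + 286178*x^4*y^8 + 43890*x^4*y^9 + 5440*x^5*y + 107864*x^5*y^2 + 716620*x^5*y^3 + 2335346*x^5*y^4 + 4297706*x^5*y^5 + 4701324*x^5*y^6 + 3034944*x^5*y^7 + 1068180*x^5*y^8 + 158004*x^5*y^9 + 1300*x^6 + 61100*x^6*y + 690844*x^6*y^2 + 3450468*x^6*y^3 + 9406657*x^6*y^4 + 15318386*x^6*y^5 + 15351618*x^6*y^6 + 9297812*x^6*y^7 + 3125025*x^6*y^8 + 447678*x^6*y^9 + 12600*x^7 + 330048*x^7*y + 2803932*x^7*y^2 + 11727812*x^7*y^3 + 28289058*x^7*y^4 + 42132584*x^7*y^5 + 39484038*x^7*y^6 + 22724816*x^7*y^7 + 7348896*x^7*y^8 + 1023264*x^7*y^9 + 58664*x^8 + 1137106*x^8*y + 8084860*x^8*y^2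 + 29950792*x^8*y^3 + 66101300*x^8*y^4 + 91999134*x^8*y^5 + 81779880*x^8*y^6 + 45150948*x^8*y^7 + 14131896*x^8*y^8 + 1918620*x^8*y^9 + 174048*x^9 + 2795300*x^9*y + 17591652*x^9*y^2 + 59676644*x^9*y^3 + 123149740*x^9*y^4 + 162561208*x^9*y^5 + 138489320*x^9*y^6 + 73870472*x^9*y^7 + 22483384*x^9*y^8 + 2984520*x^9*y^9 + 368056*x^10 + 5198118*x^10*y + 29937749*x^10*y^2 + 95018845*x^10*y^3 + 186080069*x^10*y^4 + 235443703*x^10*y^5 + 193707696*x^10*y^6 + 100374326*x^10*y^7 + 29821298*x^10*y^8 + 3879876*x^10*y^9 + 587792*x^11 + 7565040*x^11*y + 40741406*x^11*y^2 + 122762168*x^11*y^3 + 230554028*x^11*y^4 + 281795104*x^11*y^5 + 225201990*x^11*y^6 + 113852024*x^11*y^7 + 33121712*x^11*y^8 + 4232592*x^11*y^9 + 732625*x^12 + 8792980*x^12*y + 44935911*x^12*y^2 + 129881399*x^12*y^3 + 235718958*x^12*y^4 + 279932639*x^12*y^5 + 218278450*x^12*y^6 + 108033302*x^12*y^7 + 30854252*x^12*y^8 + 3879876*x^12*y^9 + 726154*x^13 + 8256026*x^13*y + 40456784*x^13*y^2 + 113016580*x^13*y^3 + 199345826*x^13*y^4 + 231041418*x^13*y^5 + 176392092*x^13*y^6 + 85702608*x^13*y^7 + 24080296*x^13*y^8 + 2984520*x^13*y^9 + 577739*x^14 + 6292108*x^14*y + 29792000*x^14*y^2 + 80890376*x^14*y^3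 + 139272553*x^14*y^4 + 158074676*x^14*y^5 + 118488666*x^14*y^6 + 56639412*x^14*y^7 + 15684234*x^14*y^8 + 1918620*x^14*y^9 + 369758*x^15 + 3889008*x^15*y + 17894654*x^15*y^2 + 47428544*x^15*y^3 + 79978394*x^15*y^4 + 89135648*x^15*y^5 + 65741418*x^15*y^6 + 30972944*x^15*y^7 + 8465184*x^15*y^8 + 1023264*x^15*y^9 + 189524*x^16 + 1936830*x^16*y + 8699120*x^16*y^2 + 22582316*x^16*y^3 + 37394828*x^16*y^4 + 41010524*x^16*y^5 + 29813400*x^16*y^6 + 13863740*x^16*y^7 + 3744216*x^16*y^8 + 447678*x^16*y^9 + 76908*x^17 + 767232*x^17*y + 3375240*x^17*y^2 + 8604420*x^17*y^3 + 14021064*x^17*y^4 + 15156588*x^17*y^5 + 10875432*x^17*y^6 + 4997340*x^17*y^7 + 1334940*x^17*y^8 + 158004*x^17*y^9 + 24204*x^18 + 236553*x^18*y + 1022051*x^18*y^2 + 2564007*x^18*y^3 + 4118235*x^18*y^4 + 4393849*x^18*y^5 + 3115233*x^18*y^6 + 1415781*x^18*y^7 + 374357*x^18*y^8 + 43890*x^18*y^9 + 5708*x^19 + 54804*x^19*y + 233044*x^19*y^2 + 576268*x^19*y^3 + 913500*x^19*y^4 + 962948*x^19*y^5 + 675164*x^19*y^6 + 303684*x^19*y^7 + 79528*x^19*y^8 + 9240*x^19*y^9 + 951*x^20 + 8989*x^20*y + 37681*x^20*y^2 + 91959*x^20*y^3 + 144011*x^20*y^4 + 150101*x^20*y^5 +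 104139*x^20*y^6 + 46381*x^20*y^7 + 12034*x^20*y^8 + 1386*x^20*y^9 + 100*x^21 + 932*x^21*y + 3856*x^21*y^2 + 9296*x^21*y^3 + 14392*x^21*y^4 + 14840*x^21*y^5 + 10192*x^21*y^6 + 4496*x^21*y^7 + 1156*x^21*y^8 + 132*x^21*y^9 + 5*x^22 + 46*x^22*y + 188*x^22*y^2 + 448*x^22*y^3 + 686*x^22*y^4 + 700*x^22*y^5 + 476*x^22*y^6 + 208*x^22*y^7 + 53*x^22*y^8 + 6*x^22*y^9)"
lemma TT_expand: "b^18*u^9*TT a b = (a*b^2*u)^0*b^18*u^9*(- 6*b^4) + (a*b^2*u)^1*b^16*u^8*(12*b^3 - b^4 + 10*b^5 + b^6) + (a*b^2*u)^2*b^14*u^7*(- 2*b^2 + 6*b^3 - 15*b^4 - 5*b^6) + (a*b^2*u)^3*b^12*u^6*(- 2*b - 24*b^2 + 6*b^3 - 10*b^4 - 2*b^6) + (a*b^2*u)^4*b^10*u^5*(1 + 8*b + b^2 + 34*b^3 - 8*b^4 + 12*b^5 + 4*b^6) + (a*b^2*u)^5*b^8*u^4*(- 2 + 16*b - 11*b^2 + 2*b^3 - 12*b^4 + 6*b^5 - 3*b^6) + (a*b^2*u)^6*b^6*u^3*(- 2 - 4*b - 26*b^2 + 10*b^3 - 7*b^4 - 4*b^5 + b^6) + (a*b^2*u)^7*b^4*u^2*(- 2 + 2*b + 10*b^2 + 10*b^3 - 4*b^4) + (a*b^2*u)^8*b^2*u^1*(1 + 4*b - 5*b^2 - 2*b^3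 + 4*b^4) + (a*b^2*u)^9*b^0*u^0*(- 3*b^2 + 2*b^3 - b^4)"
  unfolding TT_def by algebra
lemma QQ_SS: "QQ (1+x) (1+y) = - SS x y"
  unfolding QQ_def SS_def by algebra

definition gg :: "real \<Rightarrow> real \<Rightarrow> real" where
 "gg a b = (b+1)/(b-1) + (1-a)/(1+a) * ((b+3)/(2*(b-1)) + a*(1-a)*(b*(b+1)^2/((b-1)*(1-a*b)*(b-a))) + (2*(1-a)*(b^2/((b-1)*(b-a))) - (1-a)*(b/(b-a^2))))"

lemma basic:
  assumes "0 < (a::real)" "a < 1" "1 < b" "b < 1/a"
  shows "a*b < 1" "a^2 < b" "a < b"
proof -
  show ab: "a*b < 1" using assms by (simp add: field_simps)
  have "a^2 < a" using assms by (simp add: power2_eq_square)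
  thus "a^2 < b" using assms by simp
  show "a < b" using assms by simp
qed

lemma inv_eq:
  assumes "0 < a" "a < 1" "1 < b" "b < 1/a"
  shows "ladder_inv_speed a b = gg a b"
proof -
  note bs = basic[OF assms]
  define p where "p = b - 1"
  define q where "q = 1 - a*b"
  define r where "r = b - a"
  define s where "s = b - a^2"
  have h: "p \<noteq> 0" "q \<noteq> 0" "r \<noteq> 0" "s \<noteq> 0" "b \<noteq> 0"
    using assms bs by (auto simp: p_def q_def r_def s_def)
  have sm: "1 - a / b = r / b" using h unfolding r_def by (simp add: field_simps)
  have S3: "b * (b + 1) / p^2 * ((1 - a) / q - (1 - a) / (r / b)) = a*(1-a)*(b*(b+1)^2/(p*q*r))"
    using h apply (simp add: field_simps) unfolding p_def q_def r_def by algebra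
  have S4: "(2 * b / p - r / s) * ((1-a)/(r/b)) = 2*(1-a)*(b^2/(p*r)) - (1-a)*(b/s)"
    using h apply (simp add: field_simps) by algebra
  show ?thesis unfolding ladder_inv_speed_def gg_def Let_def sm
    unfolding p_def[symmetric] q_def[symmetric] r_def[symmetric] s_def[symmetric]
    unfolding S4 S3 ..
qed

lemma D1: "(b::real) \<noteq> 1 \<Longrightarrow> DERIV (\<lambda>b. (b+1)/(b-1)) b :> (1*(b-1) - (b+1)*1)/((b-1)*(b-1))"
  by (rule DERIV_divide, (rule derivative_eq_intros refl | simp)+)
lemma D2: "(b::real) \<noteq> 1 \<Longrightarrow> DERIV (\<lambda>b. (b+3)/(2*(b-1))) b :> (1*(2*(b-1)) - (b+3)*2)/((2*(b-1))*(2*(b-1)))"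
  by (rule DERIV_divide, (rule derivative_eq_intros refl | simp)+)
lemma D6: "(b::real) - a^2 \<noteq> 0 \<Longrightarrow> DERIV (\<lambda>b. b/(b-a^2)) b :> (1*(b-a^2) - b*1)/((b-a^2)*(b-a^2))"
  by (rule DERIV_divide, (rule derivative_eq_intros refl | simp)+)
lemma D4: assumes "((b::real)-1)*(1-a*b)*(b-a) \<noteq> 0"
  shows "DERIV (\<lambda>b. b*(b+1)^2/((b-1)*(1-a*b)*(b-a))) b :>
     (((b+1)^2+2*b*(b+1))*((b-1)*(1-a*b)*(b-a)) - b*(b+1)^2*((1-a*b)*(b-a) - a*(b-1)*(b-a) + (b-1)*(1-a*b))) / (((b-1)*(1-a*b)*(b-a))*((b-1)*(1-a*b)*(b-a)))"
proof -
  have n: "DERIV (\<lambda>b. b*(b+1)^2) b :> (b+1)^2+2*b*(b+1)"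
    by (rule derivative_eq_intros refl | simp)+
  have d: "DERIV (\<lambda>b. (b-1)*(1-a*b)*(b-a)) b :> (1-a*b)*(b-a) - a*(b-1)*(b-a) + (b-1)*(1-a*b)"
    apply (rule derivative_eq_intros refl | simp)+ by algebra
  show ?thesis using DERIV_divide[OF n d assms] .
qed
lemma D5: assumes "((b::real)-1)*(b-a) \<noteq> 0"
  shows "DERIV (\<lambda>b. b^2/((b-1)*(b-a))) b :>
     ((2*b)*((b-1)*(b-a)) - b^2*(2*b-1-a)) / (((b-1)*(b-a))*((b-1)*(b-a)))"
proof -
  have n: "DERIV (\<lambda>b. b^2) b :> 2*b"
    by (rule derivative_eq_intros refl | simp)+
  have d: "DERIV (\<lambda>b. (b-1)*(b-a)) b :> 2*b-1-a"
    by (rule derivative_eq_intros refl | simp)+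
  show ?thesis using DERIV_divide[OF n d assms] .
qed

lemma lin_aux:
  fixes x1 x2 x4 x5 x6 :: real
  assumes "t \<noteq> 0"
  shows "(x1 + (1-a)/t*(x2 + c*x4 + (e*x5 - f*x6)))*(t*L) = t*(x1*L) + (1-a)*(x2*L + c*(x4*L) + (e*(x5*L) - f*(x6*L)))"
  using assms by (simp add: field_simps)

lemma gg_deriv:
  assumes "0 < a" "a < 1" "1 < b" "b < 1/a"
  shows "DERIV (gg a) b :> TT a b / ((1+a)*((b-1)^2*(1-a*b)^2*(b-a)^2*(b-a^2)^2))"
proof -
  note bs = basic[OF assms]
  have h0: "b \<noteq> 1" "b - a^2 \<noteq> 0" "(b-1)*(1-a*b)*(b-a) \<noteq> 0" "(b-1)*(b-a) \<noteq> 0"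
    using assms bs by auto
  have E: "DERIV (gg a) b :> (1*(b-1) - (b+1)*1)/((b-1)*(b-1)) + (1-a)/(1+a) *
     ((1*(2*(b-1)) - (b+3)*2)/((2*(b-1))*(2*(b-1)))
      + a*(1-a)*((((b+1)^2+2*b*(b+1))*((b-1)*(1-a*b)*(b-a)) - b*(b+1)^2*((1-a*b)*(b-a) - a*(b-1)*(b-a) + (b-1)*(1-a*b))) / (((b-1)*(1-a*b)*(b-a))*((b-1)*(1-a*b)*(b-a))))
      + (2*(1-a)*(((2*b)*((b-1)*(b-a)) - b^2*(2*b-1-a)) / (((b-1)*(b-a))*((b-1)*(b-a))))
         - (1-a)*((1*(b-a^2) - b*1)/((b-a^2)*(b-a^2)))))"
    unfolding gg_def[abs_def]
    by (rule DERIV_add[OF D1[OF h0(1)] DERIV_cmult[OF DERIV_add[OF DERIV_add[OF D2[OF h0(1)] DERIV_cmult[OF D4[OF h0(3)]]] DERIV_diff[OF DERIV_cmult[OF D5[OF h0(4)]] DERIV_cmult[OF D6[OF h0(2)]]]]]])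
  define p where "p = b - 1"
  define q where "q = 1 - a*b"
  define r where "r = b - a"
  define w where "w = b - a^2"
  have h: "p \<noteq> 0" "q \<noteq> 0" "r \<noteq> 0" "w \<noteq> 0" "1 + a \<noteq> 0"
    using assms bs by (auto simp: p_def q_def r_def w_def)
  define LL where "LL = p^2*q^2*r^2*w^2"
  have c1: "(1*p - (b+1)*1)/(p*p) * LL = (1*p - (b+1)*1)*(q^2*r^2*w^2)"
    using h unfolding LL_def by (simp add: field_simps power2_eq_square)
  have c2: "(1*(2*p) - (b+3)*2)/((2*p)*(2*p)) * LL = (1*(2*p) - (b+3)*2)*(q^2*r^2*w^2)/4"
    using h unfolding LL_def by (simp add: field_simps power2_eq_square)
  have c4: "(((b+1)^2+2*b*(b+1))*(p*q*r) - b*(b+1)^2*(q*r - a*p*r + p*q)) / ((p*q*r)*(p*q*r)) * LL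
     = (((b+1)^2+2*b*(b+1))*(p*q*r) - b*(b+1)^2*(q*r - a*p*r + p*q))*w^2"
    using h unfolding LL_def by (simp add: field_simps power2_eq_square)
  have c5: "((2*b)*(p*r) - b^2*(2*b-1-a)) / ((p*r)*(p*r)) * LL = ((2*b)*(p*r) - b^2*(2*b-1-a))*(q^2*w^2)"
    using h unfolding LL_def by (simp add: field_simps power2_eq_square)
  have c6: "(1*w - b*1)/(w*w) * LL = (1*w - b*1)*(p^2*q^2*r^2)"
    using h unfolding LL_def by (simp add: field_simps power2_eq_square)
  have TTf: "TT a b = - 4*q^2*r^2*w^2
 + (1-a)^2*a*(((b+1)^2+2*b*(b+1))*(p*q*r) - b*(b+1)^2*(q*r - a*p*r + p*q))*w^2
 + 2*(1-a)^2*(2*b*(p*r) - b^2*(2*b-1-a))*q^2*w^2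
 + (1-a)^2*a^2*p^2*q^2*r^2"
    unfolding TT_def p_def q_def r_def w_def by simp
  let ?X = "(1*p - (b+1)*1)/(p*p) + (1-a)/(1+a) *
     ((1*(2*p) - (b+3)*2)/((2*p)*(2*p))
      + a*(1-a)*((((b+1)^2+2*b*(b+1))*(p*q*r) - b*(b+1)^2*(q*r - a*p*r + p*q)) / ((p*q*r)*(p*q*r)))
      + (2*(1-a)*(((2*b)*(p*r) - b^2*(2*b-1-a)) / ((p*r)*(p*r)))
         - (1-a)*((1*w - b*1)/(w*w))))"
  have "?X * ((1+a)*LL) = TT a b"
    unfolding lin_aux[OF h(5)] c1 c2 c4 c5 c6 TTf unfolding p_def q_def r_def w_def by algebra
  hence X: "?X = TT a b / ((1+a)*LL)"
    using h unfolding LL_def by (simp add: eq_divide_eq)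
  have E2: "DERIV (gg a) b :> ?X"
    using E unfolding p_def[symmetric] q_def[symmetric] r_def[symmetric] w_def[symmetric]
    by (simp only: mult_1 mult_1_right)
  have E3: "DERIV (gg a) b :> TT a b / ((1+a)*LL)" using E2 unfolding X .
  show ?thesis using E3 unfolding LL_def p_def q_def r_def w_def .
qed

definition SS2 :: "real \<Rightarrow> real \<Rightarrow> real" where "SS2 x y = (32*y^6 + 56*y^7 + 32*y^8 + 6*y^9 + 416*x*y^5 + 1336*x*y^6 + 1532*x*y^7 + 748*x*y^8 + 132*x*y^9 + 2168*x^2*y^4 + 10958*x^2*y^5 + 20919*x^2*y^6 + 19021*x^2*y^7 + 8281*x^2*y^8 + 1386*x^2*y^9 + 5744*x^3*y^3 + 43644*x^3*y^4 + 127140*x^3*y^5 + 185646*x^3*y^6 + 144996*x^3*y^7 + 57832*x^3*y^8 + 9240*x^3*y^9 + 8028*x^4*y^2 + 93486*x^4*y^3 + 405527*x^4*y^4 + 890930*x^4*y^5 + 1097443*x^4*y^6 + 768869*x^4*y^7 + 286178*x^4*y^8 + 43890*x^4*y^9 + 5440*x^5*y + 107864*x^5*y^2 + 716620*x^5*y^3 + 2335346*x^5*y^4 + 4297706*x^5*y^5 + 4701324*x^5*y^6 + 3034944*x^5*y^7 + 1068180*x^5*y^8 + 158004*x^5*y^9 + 61100*x^6*y + 690844*x^6*y^2 + 3450468*x^6*y^3 + 9406657*x^6*y^4 + 15318386*x^6*y^5 + 15351618*x^6*y^6 + 9297812*x^6*y^7 + 3125025*x^6*y^8 + 447678*x^6*y^9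 + 12600*x^7 + 330048*x^7*y + 2803932*x^7*y^2 + 11727812*x^7*y^3 + 28289058*x^7*y^4 + 42132584*x^7*y^5 + 39484038*x^7*y^6 + 22724816*x^7*y^7 + 7348896*x^7*y^8 + 1023264*x^7*y^9 + 58664*x^8 + 1137106*x^8*y + 8084860*x^8*y^2 + 29950792*x^8*y^3 + 66101300*x^8*y^4 + 91999134*x^8*y^5 + 81779880*x^8*y^6 + 45150948*x^8*y^7 + 14131896*x^8*y^8 + 1918620*x^8*y^9 + 174048*x^9 + 2795300*x^9*y + 17591652*x^9*y^2 + 59676644*x^9*y^3 + 123149740*x^9*y^4 + 162561208*x^9*y^5 + 138489320*x^9*y^6 + 73870472*x^9*y^7 + 22483384*x^9*y^8 + 2984520*x^9*y^9 + 368056*x^10 + 5198118*x^10*y + 29937749*x^10*y^2 + 95018845*x^10*y^3 + 186080069*x^10*y^4 + 235443703*x^10*y^5 + 193707696*x^10*y^6 + 100374326*x^10*y^7 + 29821298*x^10*y^8 + 3879876*x^10*y^9 + 587792*x^11 + 7565040*x^11*y + 40741406*x^11*y^2 + 122762168*x^11*y^3 + 230554028*x^11*y^4 + 281795104*x^11*y^5 + 225201990*x^11*y^6 + 113852024*x^11*y^7 + 33121712*x^11*y^8 + 4232592*x^11*y^9 + 732625*x^12 + 8792980*x^12*y + 44935911*x^12*y^2 + 129881399*x^12*y^3 + 235718958*x^12*y^4 + 279932639*x^12*y^5 + 218278450*x^12*y^6 + 108033302*x^12*y^7 + 30854252*x^12*y^8 + 3879876*x^12*y^9 + 726154*x^13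 + 8256026*x^13*y + 40456784*x^13*y^2 + 113016580*x^13*y^3 + 199345826*x^13*y^4 + 231041418*x^13*y^5 + 176392092*x^13*y^6 + 85702608*x^13*y^7 + 24080296*x^13*y^8 + 2984520*x^13*y^9 + 577739*x^14 + 6292108*x^14*y + 29792000*x^14*y^2 + 80890376*x^14*y^3 + 139272553*x^14*y^4 + 158074676*x^14*y^5 + 118488666*x^14*y^6 + 56639412*x^14*y^7 + 15684234*x^14*y^8 + 1918620*x^14*y^9 + 369758*x^15 + 3889008*x^15*y + 17894654*x^15*y^2 + 47428544*x^15*y^3 + 79978394*x^15*y^4 + 89135648*x^15*y^5 + 65741418*x^15*y^6 + 30972944*x^15*y^7 + 8465184*x^15*y^8 + 1023264*x^15*y^9 + 189524*x^16 + 1936830*x^16*y + 8699120*x^16*y^2 + 22582316*x^16*y^3 + 37394828*x^16*y^4 + 41010524*x^16*y^5 + 29813400*x^16*y^6 + 13863740*x^16*y^7 + 3744216*x^16*y^8 + 447678*x^16*y^9 + 76908*x^17 + 767232*x^17*y + 3375240*x^17*y^2 + 8604420*x^17*y^3 + 14021064*x^17*y^4 + 15156588*x^17*y^5 + 10875432*x^17*y^6 + 4997340*x^17*y^7 + 1334940*x^17*y^8 + 158004*x^17*y^9 + 24204*x^18 + 236553*x^18*y + 1022051*x^18*y^2 + 2564007*x^18*y^3 + 4118235*x^18*y^4 + 4393849*x^18*y^5 + 3115233*x^18*y^6 + 1415781*x^18*y^7 + 374357*x^18*y^8 + 43890*x^18*y^9 + 5708*x^19 + 54804*x^19*y + 233044*x^19*y^2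 + 576268*x^19*y^3 + 913500*x^19*y^4 + 962948*x^19*y^5 + 675164*x^19*y^6 + 303684*x^19*y^7 + 79528*x^19*y^8 + 9240*x^19*y^9 + 951*x^20 + 8989*x^20*y + 37681*x^20*y^2 + 91959*x^20*y^3 + 144011*x^20*y^4 + 150101*x^20*y^5 + 104139*x^20*y^6 + 46381*x^20*y^7 + 12034*x^20*y^8 + 1386*x^20*y^9 + 100*x^21 + 932*x^21*y + 3856*x^21*y^2 + 9296*x^21*y^3 + 14392*x^21*y^4 + 14840*x^21*y^5 + 10192*x^21*y^6 + 4496*x^21*y^7 + 1156*x^21*y^8 + 132*x^21*y^9 + 5*x^22 + 46*x^22*y + 188*x^22*y^2 + 448*x^22*y^3 + 686*x^22*y^4 + 700*x^22*y^5 + 476*x^22*y^6 + 208*x^22*y^7 + 53*x^22*y^8 + 6*x^22*y^9)"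

lemma SS_split: "SS x y = 1300*x^6 + SS2 x y"
  unfolding SS_def SS2_def by algebra

lemma SS2_nonneg: "0 \<le> x \<Longrightarrow> 0 \<le> y \<Longrightarrow> 0 \<le> SS2 x y"
  unfolding SS2_def by (intro add_nonneg_nonneg mult_nonneg_nonneg zero_le_power; simp)

lemma SS_pos: "0 < x \<Longrightarrow> 0 \<le> y \<Longrightarrow> 0 < SS x y"
  unfolding SS_split using SS2_nonneg[of x y] by (simp add: add_pos_nonneg)

lemma TT_neg:
  assumes "0 < a" "a < 1" "1 < b" "a*b^2 \<le> 1"
  shows "TT a b < 0"
proof -
  define u where "u = 1/(a*b^2)"
  have pos: "0 < a*b^2" using assms by simp
  have abu: "a*b^2*u = 1" using pos assms unfolding u_def by simp
  have u1: "1 \<le> u" using pos assms(4) unfolding u_def by (simp add: field_simps)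
  have e1: "b^18*u^9*TT a b = QQ b u"
    using TT_expand[of b u a] unfolding abu power_one mult_1 QQ_def .
  have "QQ b u = QQ (1+(b-1)) (1+(u-1))" by simp
  also have "\<dots> = - SS (b-1) (u-1)" by (rule QQ_SS)
  finally have "b^18*u^9*TT a b < 0" using e1 SS_pos[of "b-1" "u-1"] assms u1 by simp
  moreover have "0 < b^18*u^9" using assms u1 by simp
  ultimately show ?thesis using u1 by (simp add: mult_less_0_iff)
qed

lemma gg_lower:
  assumes "0 < a" "a < 1" "1 < b" "b < 1/a"
  shows "(1-a)/(1+a)*(a*(1-a)/(1-a*b)) \<le> gg a b"
proof -
  note bs = basic[OF assms]
  have q: "0 < 1 - a*b" "0 < b - a" "0 < b - 1" "0 < b - a^2" using bs assms by auto
  have k: "0 < (1-a)/(1+a)" using assms by simp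
  have A: "0 < (b+1)/(b-1)" "0 < (b+3)/(2*(b-1))" using assms by auto
  have t4: "1/(1-a*b) \<le> b*(b+1)^2/((b-1)*(1-a*b)*(b-a))"
  proof -
    have "(b-1)*(b-a) \<le> b*(b+1)^2"
    proof -
      have "(b-1)*(b-a) \<le> b*b" using q assms by (intro mult_mono) auto
      also have "\<dots> \<le> b*(b+1)^2"
      proof (intro mult_left_mono)
        have "b \<le> (b+1)*1" by simp
        also have "\<dots> \<le> (b+1)*(b+1)" using assms by (intro mult_left_mono) auto
        finally show "b \<le> (b+1)^2" by (simp add: power2_eq_square)
      qed (use assms in auto)
      finally show ?thesis .
    qed
    hence X: "1 \<le> b*(b+1)^2/((b-1)*(b-a))" using q by (simp add: le_divide_eq)
    have "b*(b+1)^2/((b-1)*(1-a*b)*(b-a)) = (b*(b+1)^2/((b-1)*(b-a))) * (1/(1-a*b))"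
      using q by (simp add: field_simps)
    moreover have "1 * (1/(1-a*b)) \<le> (b*(b+1)^2/((b-1)*(b-a))) * (1/(1-a*b))"
      using X q by (intro mult_right_mono) auto
    ultimately show ?thesis by (simp only: mult_1)
  qed
  have t4': "a*(1-a)/(1-a*b) \<le> a*(1-a)*(b*(b+1)^2/((b-1)*(1-a*b)*(b-a)))"
    using mult_left_mono[OF t4, of "a*(1-a)"] assms by simp
  have t56: "(1-a)*(b/(b-a^2)) \<le> 2*(1-a)*(b^2/((b-1)*(b-a)))"
  proof -
    have "b - a \<le> b - a^2" using assms by (simp add: power2_eq_square)
    hence s1: "b/(b-a^2) \<le> b/(b-a)" using q assms by (intro divide_left_mono) auto
    have "b*(b-1) \<le> 2*b^2" using assms by (simp add: power2_eq_square algebra_simps)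
    hence "b \<le> 2*b^2/(b-1)" using q by (simp add: le_divide_eq)
    hence "b/(b-a) \<le> (2*b^2/(b-1))/(b-a)" using q by (intro divide_right_mono) auto
    also have "\<dots> = 2*(b^2/((b-1)*(b-a)))" by simp
    finally have "b/(b-a^2) \<le> 2*(b^2/((b-1)*(b-a)))" using s1 by linarith
    hence "(1-a)*(b/(b-a^2)) \<le> (1-a)*(2*(b^2/((b-1)*(b-a))))" using assms by (intro mult_left_mono) auto
    thus ?thesis by (simp only: mult.assoc mult.left_commute)
  qed
  have "a*(1-a)/(1-a*b) \<le> (b+3)/(2*(b-1)) + a*(1-a)*(b*(b+1)^2/((b-1)*(1-a*b)*(b-a))) + (2*(1-a)*(b^2/((b-1)*(b-a))) - (1-a)*(b/(b-a^2)))"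
    using t4' t56 A by linarith
  hence "(1-a)/(1+a)*(a*(1-a)/(1-a*b)) \<le> (1-a)/(1+a)*((b+3)/(2*(b-1)) + a*(1-a)*(b*(b+1)^2/((b-1)*(1-a*b)*(b-a))) + (2*(1-a)*(b^2/((b-1)*(b-a))) - (1-a)*(b/(b-a^2))))"
    using k by (intro mult_left_mono) auto
  thus ?thesis unfolding gg_def using A by linarith
qed

lemma aux_half: "(x::real) < c \<Longrightarrow> h \<le> (c - x)/2 \<Longrightarrow> x + h < c"
  by argo

theorem mainTheorem5:
  fixes \<alpha> :: real
  assumes "0 < \<alpha>" and "\<alpha> < 1"
  shows "(\<exists>D. (ladder_speed \<alpha> has_real_derivative D) (at (1 / sqrt \<alpha>)) \<and> D > 0)
       \<and> (\<exists>\<beta>m\<in>{1<..<1/\<alpha>}. \<forall>\<beta>\<in>{1<..<1/\<alpha>}. ladder_speed \<alpha> \<beta> \<le> ladder_speed \<alpha> \<beta>m)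
       \<and> (\<forall>\<beta>m\<in>{1<..<1/\<alpha>}. (\<forall>\<beta>\<in>{1<..<1/\<alpha>}. ladder_speed \<alpha> \<beta> \<le> ladder_speed \<alpha> \<beta>m)
             \<longrightarrow> 1 / sqrt \<alpha> < \<beta>m)"
proof -
  define a where "a = \<alpha>"
  have a0: "0 < a" "a < 1" using assms unfolding a_def by auto
  define I where "I = {1<..<1/a}"
  define f where "f = ladder_inv_speed a"
  define G where "G = (\<lambda>b. TT a b / ((1+a)*((b-1)^2*(1-a*b)^2*(b-a)^2*(b-a^2)^2)))"
  define bc where "bc = 1 / sqrt a"
  have vdef: "ladder_speed a = (\<lambda>b. 1 / f b)" unfolding f_def ladder_speed_def[abs_def] ..
  have sa1: "0 < sqrt a" "sqrt a < 1" using a0 by auto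
  have "sqrt a * sqrt a < sqrt a * 1" using sa1 by (intro mult_strict_left_mono) auto
  hence sa: "0 < sqrt a" "sqrt a < 1" "a < sqrt a" using sa1 a0 by auto
  have bcI: "1 < bc" "bc < 1/a" using sa a0 unfolding bc_def by (auto simp: field_simps)
  have abc: "a * bc^2 = 1" using a0 unfolding bc_def by (simp add: power_divide)
  have inI: "b \<in> I \<longleftrightarrow> 1 < b \<and> b < 1/a" for b unfolding I_def by auto
  have fd: "DERIV f b :> G b" if "b \<in> I" for b
  proof -
    have b: "1 < b" "b < 1/a" using that unfolding I_def by auto
    show ?thesis unfolding G_def
    proof (rule has_field_derivative_transform_within_open[OF gg_deriv[OF a0 b] _ that])
      show "open I" unfolding I_def by simp
      fix x assume "x \<in> I" thus "gg a x = f x" unfolding f_def using inv_eq[OF a0] unfolding I_def by auto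
    qed
  qed
  have K: "0 < (1-a)/(1+a)*(a*(1-a))" using a0 by simp
  have flow: "(1-a)/(1+a)*(a*(1-a))/(1-a*b) \<le> f b" "0 < f b" if "b \<in> I" for b
  proof -
    have b: "1 < b" "b < 1/a" using that unfolding I_def by auto
    have ab: "0 < 1 - a*b" using b a0 by (simp add: field_simps)
    have "(1-a)/(1+a)*(a*(1-a))/(1-a*b) = (1-a)/(1+a)*(a*(1-a)/(1-a*b))" by simp
    also have "\<dots> \<le> f b" using gg_lower[OF a0 b] inv_eq[OF a0 b] unfolding f_def by simp
    finally show "(1-a)/(1+a)*(a*(1-a))/(1-a*b) \<le> f b" .
    moreover have "0 < (1-a)/(1+a)*(a*(1-a))/(1-a*b)" using K ab by (rule divide_pos_pos)
    ultimately show "0 < f b" by linarith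
  qed
  have Gneg: "G b < 0" if "b \<in> I" "a*b^2 \<le> 1" for b
  proof -
    have b: "1 < b" "b < 1/a" using that unfolding I_def by auto
    note bs = basic[OF a0 b]
    have "0 < (1+a)*((b-1)^2*(1-a*b)^2*(b-a)^2*(b-a^2)^2)" using a0 b bs by simp
    thus ?thesis unfolding G_def using TT_neg[OF a0 b(1) that(2)] by (simp add: divide_neg_pos)
  qed
  have vd: "DERIV (\<lambda>b. 1 / f b) b :> (0 * f b - 1 * G b) / (f b * f b)" if "b \<in> I" for b
    by (rule DERIV_divide[OF DERIV_const fd[OF that]]) (use flow(2)[OF that] in simp)
  have bcIn: "bc \<in> I" using bcI unfolding I_def by auto
  have small: "a*b^2 \<le> 1" if "b \<in> I" "b \<le> bc" for b
  proof -
    have "b^2 \<le> bc^2" using that unfolding I_def by (intro power_mono) auto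
    hence "a*b^2 \<le> a*bc^2" using a0 by simp
    thus ?thesis using abc by simp
  qed
  have fdec: "f b2 < f b1" if "b1 \<in> I" "b2 \<in> I" "b1 < b2" "b2 \<le> bc" for b1 b2
  proof (rule DERIV_neg_imp_decreasing[OF that(3)])
    fix x assume x: "b1 \<le> x" "x \<le> b2"
    hence xI: "x \<in> I" using that unfolding I_def by auto
    show "\<exists>y. DERIV f x :> y \<and> y < 0"
      using fd[OF xI] Gneg[OF xI small[OF xI]] x that by auto
  qed
  have vle: "1 / f b \<le> 1 / f bc" if "b \<in> I" "b \<le> bc" for b
  proof -
    have "f bc \<le> f b" using fdec[OF that(1) bcIn] that by (cases "b = bc") force+
    thus ?thesis using flow(2)[OF bcIn] by (intro divide_left_mono) (auto intro: mult_pos_pos flow(2)[OF that(1)])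
  qed
  have part1: "\<exists>D. (ladder_speed \<alpha> has_real_derivative D) (at (1 / sqrt \<alpha>)) \<and> D > 0"
  proof (intro exI conjI)
    show "(ladder_speed \<alpha> has_real_derivative (0 * f bc - 1 * G bc) / (f bc * f bc)) (at (1 / sqrt \<alpha>))"
      using vd[OF bcIn] unfolding vdef[symmetric] a_def bc_def .
    have "G bc < 0" using Gneg[OF bcIn] abc by simp
    thus "(0 * f bc - 1 * G bc) / (f bc * f bc) > 0" using flow(2)[OF bcIn] by (simp add: divide_neg_pos)
  qed
  have part3: "\<forall>\<beta>m\<in>{1<..<1/\<alpha>}. (\<forall>\<beta>\<in>{1<..<1/\<alpha>}. ladder_speed \<alpha> \<beta> \<le> ladder_speed \<alpha> \<beta>m) \<longrightarrow> 1 / sqrt \<alpha> < \<beta>m"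
  proof (intro ballI impI)
    fix bm assume bm: "bm \<in> {1<..<1/\<alpha>}" and mx: "\<forall>\<beta>\<in>{1<..<1/\<alpha>}. ladder_speed \<alpha> \<beta> \<le> ladder_speed \<alpha> bm"
    have bmI: "bm \<in> I" using bm unfolding I_def a_def .
    show "1 / sqrt \<alpha> < bm"
    proof (rule ccontr)
      assume "\<not> 1 / sqrt \<alpha> < bm"
      hence le: "bm \<le> bc" unfolding bc_def a_def by simp
      have "G bc < 0" using Gneg[OF bcIn] abc by simp
      then obtain d where d: "d > 0" "\<And>h. h > 0 \<Longrightarrow> h < d \<Longrightarrow> f bc > f (bc + h)"
        using DERIV_neg_dec_right[OF fd[OF bcIn]] by blast
      define h where "h = min (d/2) ((1/a - bc)/2)"
      have h1: "h \<le> (1/a - bc)/2" "h \<le> d/2" unfolding h_def by (rule min.cobounded2, rule min.cobounded1)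
      have h0: "0 < h" using d bcI unfolding h_def by auto
      have h2: "h < d" using d(1) h1 by linarith
      have h3: "bc + h < 1/a"
      proof -
        obtain c where c: "c = 1/a" by blast
        have "bc < c" "h \<le> (c - bc)/2" using bcI(2) h1(1) c by auto
        hence "bc + h < c" by (rule aux_half)
        thus ?thesis using c by simp
      qed
      note h = h0 h2 h3
      have hI: "bc + h \<in> I" using h bcI unfolding I_def by auto
      have "f (bc + h) < f bc" using d h by auto
      hence "1 / f bc < 1 / f (bc + h)" using flow(2)[OF hI] by (intro divide_strict_left_mono) (auto intro: mult_pos_pos flow(2)[OF bcIn])
      moreover have "1 / f bm \<le> 1 / f bc" by (rule vle[OF bmI le])
      moreover have "1 / f (bc+h) \<le> 1 / f bm" using mx hI unfolding a_def[symmetric] vdef I_def by auto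
      ultimately show False by linarith
    qed
  qed
  have part2: "\<exists>\<beta>m\<in>{1<..<1/\<alpha>}. \<forall>\<beta>\<in>{1<..<1/\<alpha>}. ladder_speed \<alpha> \<beta> \<le> ladder_speed \<alpha> \<beta>m"
  proof -
    define Kc where "Kc = (1-a)/(1+a)*(a*(1-a))"
    define M where "M = f bc"
    have M: "0 < M" unfolding M_def using flow(2)[OF bcIn] .
    define q where "q = max bc ((1 - Kc/M)/a)"
    have q0: "(1 - Kc/M)/a < 1/a" using K M a0 unfolding Kc_def by (simp add: divide_strict_right_mono)
    have q: "bc \<le> q" "q < 1/a" using q0 bcI unfolding q_def by auto
    have sub: "{bc..q} \<subseteq> I" using q bcI unfolding I_def by auto
    have cont: "continuous_on {bc..q} (\<lambda>b. 1 / f b)"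
    proof (rule continuous_at_imp_continuous_on, rule ballI)
      fix x assume "x \<in> {bc..q}"
      hence "x \<in> I" using sub by auto
      thus "isCont (\<lambda>b. 1 / f b) x" by (rule DERIV_isCont[OF vd])
    qed
    obtain bm where bm: "bm \<in> {bc..q}" "\<And>y. y \<in> {bc..q} \<Longrightarrow> 1 / f y \<le> 1 / f bm"
      using continuous_attains_sup[OF compact_Icc _ cont] q by auto
    have bmI: "bm \<in> I" using bm sub by auto
    have all: "1 / f b \<le> 1 / f bm" if "b \<in> I" for b
    proof -
      consider "b \<le> bc" | "bc \<le> b" "b \<le> q" | "q < b" by linarith
      thus ?thesis
      proof cases
        case 1 thus ?thesis using vle[OF that 1] bm(2)[of bc] q by force
      next
        case 2 thus ?thesis using bm(2) by auto
      next
        case 3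
        have b: "1 < b" "b < 1/a" using that unfolding I_def by auto
        have ab: "0 < 1 - a*b" using b a0 by (simp add: field_simps)
        have "(1 - Kc/M)/a < b" using 3 unfolding q_def by auto
        hence "1 - Kc/M < a*b" using a0 by (simp add: field_simps)
        hence "1 - a*b < Kc/M" by simp
        have Kp: "0 < Kc" using K unfolding Kc_def .
        have KM: "0 < Kc/M" using Kp M by simp
        have "Kc/(Kc/M) < Kc/(1 - a*b)"
          by (rule divide_strict_left_mono[OF \<open>1 - a*b < Kc/M\<close> Kp mult_pos_pos[OF KM ab]])
        hence "M < Kc/(1-a*b)" using Kp M by simp
        hence "M < f b" using flow(1)[OF that] unfolding Kc_def by simp
        hence "1 / f b < 1 / M" using M by (intro divide_strict_left_mono) (auto intro: mult_pos_pos flow(2)[OF that])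
        thus ?thesis using bm(2)[of bc] q unfolding M_def by force
      qed
    qed
    show ?thesis unfolding a_def[symmetric] vdef
      using bmI all unfolding I_def by (intro bexI[of _ bm] ballI) auto
  qed
  show ?thesis using part1 part2 part3 by blast
qed

end
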